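(* Let $G$ be a finite simple graph. If $\tau^*_2(G) \leq 2\nu(G)$ and $\tau^*_3(G) \leq 2\nu(G)$, then $\tau^*_k(G) \leq 2\nu(G)$ for all integers $k \geq 2$.
   Context: A triangle of $G$ is a set of three pairwise adjacent vertices, identified with its three edges. $\nu(G)$ is the maximum number of pairwise edge-disjoint triangles in $G$. For an integer $k\ge1$, a $k$-multi-transversal of $G$ is a multiset $F$ of edges such that every triangle of $G$ contains at least $k$ elements of $F$ (counted with multiplicity); $\tau^*_k(G)$ is the minimum of $|F|/k$ over all $k$-multi-transversals $F$. *)

theory Defs
  imports Complex_Main "HOL-Library.Multiset"
begin

definition simple_graph :: "'a set \<Rightarrow> 'a set set \<Rightarrow> bool" where
  "simple_graph V E \<longleftrightarrow> finite V \<and> (\<forall>e\<in>E. e \<subseteq> V \<and> card e = 2)"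

definition tri_edges :: "'a set \<Rightarrow> 'a set set" where
  "tri_edges T = {e. e \<subseteq> T \<and> card e = 2}"

definition triangles :: "'a set \<Rightarrow> 'a set set \<Rightarrow> 'a set set" where
  "triangles V E = {T. T \<subseteq> V \<and> card T = 3 \<and> (\<forall>x\<in>T. \<forall>y\<in>T. x \<noteq> y \<longrightarrow> {x, y} \<in> E)}"

definition tri_packing_number :: "'a set \<Rightarrow> 'a set set \<Rightarrow> nat" where
  "tri_packing_number V E = Max {card P | P. P \<subseteq> triangles V E \<and>
      (\<forall>S\<in>P. \<forall>T\<in>P. S \<noteq> T \<longrightarrow> tri_edges S \<inter> tri_edges T = {})}"

definition multi_transversal :: "'a set \<Rightarrow> 'a set set \<Rightarrow> nat \<Rightarrow> 'a set multiset \<Rightarrow> bool" where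
  "multi_transversal V E k F \<longleftrightarrow> set_mset F \<subseteq> E \<and>
     (\<forall>T\<in>triangles V E. (\<Sum>e\<in>tri_edges T. count F e) \<ge> k)"

definition tau_star :: "'a set \<Rightarrow> 'a set set \<Rightarrow> nat \<Rightarrow> real" where
  "tau_star V E k = Inf {real (size F) / real k | F. multi_transversal V E k F}"

end

theory Submission
  imports Defs
begin

lemma mt_add:
  assumes "multi_transversal V E k1 F1" "multi_transversal V E k2 F2"
  shows "multi_transversal V E (k1+k2) (F1+F2)"
proof -
  have "\<forall>T\<in>triangles V E. (\<Sum>e\<in>tri_edges T. count (F1+F2) e) \<ge> k1+k2"
  proof
    fix T assume "T \<in> triangles V E"
    then have "(\<Sum>e\<in>tri_edges T. count F1 e) \<ge> k1" "(\<Sum>e\<in>tri_edges T. count F2 e) \<ge> k2"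
      using assms unfolding multi_transversal_def by auto
    then show "(\<Sum>e\<in>tri_edges T. count (F1+F2) e) \<ge> k1+k2"
      by (simp add: sum.distrib)
  qed
  moreover have "set_mset (F1+F2) \<subseteq> E" using assms unfolding multi_transversal_def by auto
  ultimately show ?thesis unfolding multi_transversal_def by blast
qed

lemma tau_attained:
  assumes "simple_graph V E" "k > 0"
  shows "\<exists>F. multi_transversal V E k F \<and> tau_star V E k = real (size F) / real k"
proof -
  have fE: "finite E"
  proof -
    have "E \<subseteq> Pow V" using assms(1) unfolding simple_graph_def by auto
    moreover have "finite V" using assms(1) unfolding simple_graph_def by auto
    ultimately show ?thesis by (meson finite_Pow_iff finite_subset)
  qed
  define F0 where "F0 = repeat_mset k (mset_set E)"
  have "multi_transversal V E k F0"
    unfolding multi_transversal_def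
  proof (intro conjI ballI)
    show "set_mset F0 \<subseteq> E" 
    proof
      fix x assume "x \<in># F0"
      then have "count F0 x > 0" by simp
      then have "count (mset_set E) x > 0" unfolding F0_def by simp
      then show "x \<in> E" by (metis count_mset_set(3) less_irrefl)
    qed
  next
    fix T assume T: "T \<in> triangles V E"
    have c3: "card T = 3" using T unfolding triangles_def by auto
    then obtain x where x: "x \<in> T" by (metis card.empty equals0I zero_neq_numeral)
    have "\<exists>y\<in>T. y \<noteq> x"
    proof (rule ccontr)
      assume "\<not> ?thesis" then have "T \<subseteq> {x}" by auto
      then have "card T \<le> 1" using card_mono[of "{x}" T] by simp
      then show False using c3 by simp
    qed
    then obtain y where y: "y \<in> T" "y \<noteq> x" by blast
    have e: "{x,y} \<in> E" using T x y unfolding triangles_def by auto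
    have "finite T" using c3 by (metis card.infinite zero_neq_numeral)
    then have fin: "finite (tri_edges T)" unfolding tri_edges_def
      using finite_Pow_iff[of T] by (simp add: Pow_def)
    have "{x,y} \<in> tri_edges T" unfolding tri_edges_def using x y by auto
    moreover have "count F0 {x,y} = k" unfolding F0_def using e fE by simp
    ultimately show "(\<Sum>e\<in>tri_edges T. count F0 e) \<ge> k"
      using fin member_le_sum[of "{x,y}" "tri_edges T" "count F0"] by simp
  qed
  then have ex: "\<exists>n F. multi_transversal V E k F \<and> size F = n" by blast
  define m where "m = (LEAST n. \<exists>F. multi_transversal V E k F \<and> size F = n)"
  obtain F where F: "multi_transversal V E k F" "size F = m"
    using LeastI_ex[OF ex] unfolding m_def by blast
  have "tau_star V E k = real (size F) / real k"
    unfolding tau_star_def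
  proof (rule cInf_eq_minimum)
    show "real (size F) / real k \<in> {real (size F) / real k |F. multi_transversal V E k F}"
      using F by blast
  next
    fix x assume "x \<in> {real (size F) / real k |F. multi_transversal V E k F}"
    then obtain G where G: "multi_transversal V E k G" "x = real (size G) / real k" by blast
    have "m \<le> size G" unfolding m_def using G by (metis (mono_tags) Least_le)
    then show "real (size F) / real k \<le> x" using G F assms(2)
      by (simp add: divide_right_mono)
  qed
  then show ?thesis using F by blast
qed

theorem proposition3:
  fixes V :: "'a set" and E :: "'a set set"
  assumes "simple_graph V E"
    and "tau_star V E 2 \<le> 2 * real (tri_packing_number V E)"
    and "tau_star V E 3 \<le> 2 * real (tri_packing_number V E)"
  shows "\<forall>k::nat. k \<ge> 2 \<longrightarrow> tau_star V E k \<le> 2 * real (tri_packing_number V E)"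
proof -
  define \<nu> where "\<nu> = tri_packing_number V E"
  have base: "\<exists>F. multi_transversal V E k F \<and> size F \<le> 2 * \<nu> * k"
    if "tau_star V E k \<le> 2 * real \<nu>" "k > 0" for k
  proof -
    obtain F where F: "multi_transversal V E k F" "tau_star V E k = real (size F) / real k"
      using tau_attained[OF assms(1) \<open>k > 0\<close>] by blast
    then have "real (size F) / real k \<le> 2 * real \<nu>" using that by simp
    then have "real (size F) \<le> 2 * real \<nu> * real k" using \<open>k>0\<close>
      by (simp add: divide_le_eq)
    then have "size F \<le> 2 * \<nu> * k" by (metis of_nat_le_iff of_nat_mult of_nat_numeral)
    then show ?thesis using F by blast
  qed
  have b2: "\<exists>F. multi_transversal V E 2 F \<and> size F \<le> 2 * \<nu> * 2"
    using base[of 2] assms(2) unfolding \<nu>_def by simp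
  have b3: "\<exists>F. multi_transversal V E 3 F \<and> size F \<le> 2 * \<nu> * 3"
    using base[of 3] assms(3) unfolding \<nu>_def by simp
  have main: "k \<ge> 2 \<Longrightarrow> \<exists>F. multi_transversal V E k F \<and> size F \<le> 2 * \<nu> * k" for k
  proof (induction k rule: less_induct)
    case (less k)
    show ?case
    proof (cases "k \<le> 3")
      case True
      then have "k = 2 \<or> k = 3" using less.prems by auto
      then show ?thesis using b2 b3 by auto
    next
      case False
      then obtain F1 where F1: "multi_transversal V E (k-2) F1" "size F1 \<le> 2 * \<nu> * (k-2)"

      proof -
        have "k - 2 < k" "2 \<le> k - 2" using False by simp_all
        then show ?thesis using less.IH[of "k-2"] that by blast
      qed
      obtain F2 where F2: "multi_transversal V E 2 F2" "size F2 \<le> 2 * \<nu> * 2" using b2 by blast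
      have "multi_transversal V E (k-2+2) (F1+F2)" using mt_add[OF F1(1) F2(1)] .
      moreover have "k - 2 + 2 = k" using False by simp
      moreover have "size (F1+F2) \<le> 2 * \<nu> * k"
      proof -
        have "2 * \<nu> * (k-2) + 2 * \<nu> * 2 = 2 * \<nu> * k" using False
          by (metis \<open>k - 2 + 2 = k\<close> add_mult_distrib2)
        then show ?thesis using F1 F2 by simp
      qed
      ultimately show ?thesis by metis
    qed
  qed
  show ?thesis
  proof (intro allI impI)
    fix k :: nat assume k: "k \<ge> 2"
    obtain F where F: "multi_transversal V E k F" "size F \<le> 2 * \<nu> * k" using main[OF k] by blast
    have "tau_star V E k \<le> real (size F) / real k"
      unfolding tau_star_def
    proof (rule cInf_lower)
      show "real (size F) / real k \<in> {real (size F) / real k |F. multi_transversal V E k F}"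
        using F by blast
      show "bdd_below {real (size F) / real k |F. multi_transversal V E k F}"
        by (rule bdd_belowI[of _ 0]) auto
    qed
    also have "\<dots> \<le> 2 * real \<nu>"
    proof -
      have "real (size F) \<le> 2 * real \<nu> * real k" using F(2)
        by (metis of_nat_le_iff of_nat_mult of_nat_numeral)
      then show ?thesis using k by (simp add: divide_le_eq)
    qed
    finally show "tau_star V E k \<le> 2 * real (tri_packing_number V E)" unfolding \<nu>_def .
  qed
qed

end
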